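(* Let $R$ be a commutative ring of characteristic $2$ and $M=\begin{pmatrix} a&b\\ c&d\end{pmatrix}$ with $a,b,c,d\in R$. Put $t=a+d$. Then for all integers $s\ge0$, \[M^{2^s}=\begin{pmatrix} a^{2^s}+\sum_{i=0}^{s-1}b^{2^i}c^{2^i}t^{2^s-2^{i+1}} & bt^{2^s-1}\\ ct^{2^s-1} & d^{2^s}+\sum_{i=0}^{s-1}b^{2^i}c^{2^i}t^{2^s-2^{i+1}}\end{pmatrix}.\]
   Context: A unital ring has characteristic $2$ if $1+1=0$ in it. *)

theory Defs
  imports "HOL-Analysis.Analysis"
begin

text \<open>Matrix power with respect to matrix multiplication (not the componentwise power).\<close>
primrec matrix_pow :: "'a::semiring_1 ^'n^'n \<Rightarrow> nat \<Rightarrow> 'a^'n^'n" where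
  "matrix_pow A 0 = mat 1"
| "matrix_pow A (Suc k) = A ** matrix_pow A k"

definition mat2 :: "'a \<Rightarrow> 'a \<Rightarrow> 'a \<Rightarrow> 'a \<Rightarrow> 'a^2^2" where
  "mat2 a b c d = (\<chi> i j. if i = 1 then (if j = 1 then a else b) else (if j = 1 then c else d))"

end

theory Submission
  imports Defs
begin

lemma mpow_add: "matrix_pow A (m+n) = matrix_pow A m ** matrix_pow A n"
  by (induction m) (simp_all add: matrix_mul_lid matrix_mul_assoc)

lemma mat2_mult: "mat2 a b c d ** mat2 a' b' c' d' =
  mat2 (a*a'+b*c') (a*b'+b*d') (c*a'+d*c') (c*b'+d*d')"
  by (simp add: vec_eq_iff forall_2 mat2_def matrix_matrix_mult_def sum_2)

context
  fixes dummy :: "'a::comm_ring_1"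
  assumes char2: "(1::'a) + 1 = 0"
begin

lemma dbl: "(x::'a) + x = 0"
proof -
  have "x + x = (1+1) * x" by (simp add: algebra_simps)
  thus ?thesis using char2 by simp
qed

lemma sq_add: "((x::'a) + y)^2 = x^2 + y^2"
proof -
  have "(x+y)^2 = x^2 + y^2 + (x*y + x*y)" by (simp add: power2_eq_square algebra_simps)
  thus ?thesis using dbl by simp
qed

lemma sq_sum: "finite I \<Longrightarrow> (sum (f::_\<Rightarrow>'a) I)^2 = (\<Sum>i\<in>I. (f i)^2)"
  by (induction I rule: finite_induct) (simp_all add: sq_add)

lemma frob: "((x::'a) + y)^(2^s) = x^(2^s) + y^(2^s)"
proof (induction s)
  case (Suc s)
  have "(x+y)^(2^Suc s) = ((x+y)^(2^s))^2" by (simp add: power_mult[symmetric] mult.commute)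
  also have "\<dots> = (x^(2^s))^2 + (y^(2^s))^2" using Suc sq_add by simp
  finally show ?case by (simp add: power_mult[symmetric] mult.commute)
qed simp

end

theorem lemma4p2:
  fixes a b c d :: "'a::comm_ring_1" and s :: nat
  assumes char2: "(1::'a) + 1 = 0"
  defines "t \<equiv> a + d"
  shows "matrix_pow (mat2 a b c d) (2^s) =
    mat2 (a^(2^s) + (\<Sum>i<s. b^(2^i) * c^(2^i) * t^(2^s - 2^(i+1))))
         (b * t^(2^s - 1))
         (c * t^(2^s - 1))
         (d^(2^s) + (\<Sum>i<s. b^(2^i) * c^(2^i) * t^(2^s - 2^(i+1))))"
proof (induction s)
  case 0
  show ?case
    by (simp add: vec_eq_iff forall_2 mat2_def matrix_matrix_mult_def sum_2 mat_def)
next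
  case (Suc s)
  define n :: nat where "n = 2^s"
  have n1: "n \<ge> 1" by (simp add: n_def)
  define S where "S = (\<Sum>i<s. b^(2^i) * c^(2^i) * t^(2^s - 2^(i+1)))"
  define T where "T = t^(n-1)"
  have IH: "matrix_pow (mat2 a b c d) n = mat2 (a^n + S) (b*T) (c*T) (d^n + S)"
    using Suc by (simp add: n_def S_def T_def)
  have sq: "matrix_pow (mat2 a b c d) (2^Suc s) = matrix_pow (mat2 a b c d) n ** matrix_pow (mat2 a b c d) n"
    by (simp add: n_def mpow_add[symmetric] mult_2)
  have tn: "t^n = a^n + d^n" unfolding t_def n_def using frob[OF char2] .
  have S2: "S^2 = (\<Sum>i<s. b^(2^(i+1)) * c^(2^(i+1)) * t^(2^(s+1) - 2^(i+2)))"
    unfolding S_def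
    apply (simp add: sq_sum[OF char2])
    apply (rule sum.cong, simp)
    apply (simp add: power_mult_distrib power_mult[symmetric])
    apply (subgoal_tac "2 * (2 ^ s - 2 * 2 ^ x) = 2 * 2 ^ s - 4 * (2::nat) ^ x")
     apply (simp add: mult.commute diff_mult_distrib)
    apply (simp add: right_diff_distrib')
    done
  have Snew: "(\<Sum>i<Suc s. b^(2^i) * c^(2^i) * t^(2^Suc s - 2^(i+1))) = S^2 + b*c*T^2"
    unfolding S2 sum.lessThan_Suc_shift
    using right_diff_distrib'[of "2::nat" "2^s" 1] by (simp add: T_def n_def power_mult[symmetric] diff_mult_distrib mult.commute add.commute)
  have A: "(a^n + S)*(a^n+S) + b*T*(c*T) = (a^n)^2 + S^2 + b*c*T^2"
    using sq_add[OF char2, of "a^n" S] by (simp add: power2_eq_square algebra_simps)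
  have D: "c*T*(b*T) + (d^n+S)*(d^n+S) = (d^n)^2 + S^2 + b*c*T^2"
    using sq_add[OF char2, of "d^n" S] by (simp add: power2_eq_square algebra_simps)
  have SS: "S + S = 0" using dbl[OF char2] .
  have tT: "T * t^n = t^(2^Suc s - 1)"
    using n1 by (simp add: T_def n_def power_add[symmetric] mult_2)
  have B: "(a^n+S)*(b*T) + b*T*(d^n+S) = b * t^(2^Suc s - 1)"
  proof -
    have "(a^n+S)*(b*T) + b*T*(d^n+S) = b*T*(a^n+d^n) + b*T*(S+S)" by (simp add: algebra_simps)
    also have "\<dots> = b*(T*t^n)" using SS tn by simp
    finally show ?thesis using tT by simp
  qed
  have C: "c*T*(a^n+S) + (d^n+S)*(c*T) = c * t^(2^Suc s - 1)"
  proof -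
    have "c*T*(a^n+S) + (d^n+S)*(c*T) = c*T*(a^n+d^n) + c*T*(S+S)" by (simp add: algebra_simps)
    also have "\<dots> = c*(T*t^n)" using SS tn by simp
    finally show ?thesis using tT by simp
  qed
  have pn: "\<And>x::'a. (x^n)^2 = x^(2^Suc s)" by (simp add: n_def power_mult[symmetric] mult.commute)
  show ?case
    unfolding sq IH mat2_mult Snew A B C D pn
    by (simp add: algebra_simps)
qed

end
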